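(* Consider an environment with $K$ channels and finite state space $\mathcal{S}$ evolving as an irreducible Markov chain with action-independent transition matrix $\mathbf{P}=\{P_{s,j}\}$ and stationary distribution $\boldsymbol{\pi}=\boldsymbol{\pi}\mathbf{P}$; let $A_{j,a}=1$ iff channel $a$ is idle in state $j$, $\mathcal{T}_j=\{a:A_{j,a}=1\}$, $m_s=\arg\max_j P_{s,j}$. The ML prediction-and-access algorithm chooses, in state $s$, channel $a\in\mathcal{T}_{m_s}$ with probability $q_s(a)$; accessing a channel $a$ that is idle in the next state yields expected reward $C_a$, otherwise reward $0$; $\mathrm{Thr}$ is the almost-sure limiting average reward. Then: (i) If $q_s(a)=I_{\{a=a^*(s)\}}$ with $a^*(s)=\arg\max_{a\in\mathcal{T}_{m_s}}C_a$, then $$\mathrm{Thr}=\sum_{s\in\mathcal{S}}\pi_s\max_{a\in\mathcal{T}_{m_s}}\{C_a\}\Big(P_{s,m_s}+\sum_{j\ne m_s}P_{s,j}A_{j,a^*(s)}\Big).$$ (ii) If $C_a=C$ for all $a$ and $q_s(a)=\frac{1}{|\mathcal{T}_{m_s}|}I_{\{a\in\mathcal{T}_{m_s}\}}$, then $$\mathrm{Thr}=C\sum_{s\in\mathcal{S}}\pi_s\Big(P_{s,m_s}+\sum_{j\ne m_s}P_{s,j}\frac{|\mathcal{T}_j\cap\mathcal{T}_{m_s}|}{|\mathcal{T}_{m_s}|}\Big)=C\sum_{s\in\mathcal{S}}\sum_{j\in\mathcal{S}}\pi_sP_{s,j}\frac{\sum_{a=1}^KA_{j,a}A_{m_s,a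}}{\sum_{a=1}^KA_{m_s,a}}.$$
   Context: $I_{\{\cdot\}}$ denotes the indicator function. The ML prediction-and-access algorithm predicts the most likely next state $m_s$ and then accesses a channel idle in that predicted state. *)

theory Defs
  imports "HOL-Probability.Probability"
begin

definition stochastic_matrix :: "('s::finite \<Rightarrow> 's \<Rightarrow> real) \<Rightarrow> bool" where
  "stochastic_matrix P \<longleftrightarrow> (\<forall>i j. 0 \<le> P i j) \<and> (\<forall>i. (\<Sum>j\<in>UNIV. P i j) = 1)"

fun mpow :: "('s::finite \<Rightarrow> 's \<Rightarrow> real) \<Rightarrow> nat \<Rightarrow> 's \<Rightarrow> 's \<Rightarrow> real" where
  "mpow P 0 i j = (if i = j then 1 else 0)"
| "mpow P (Suc n) i j = (\<Sum>k\<in>UNIV. mpow P n i k * P k j)"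

definition irreducible_chain :: "('s::finite \<Rightarrow> 's \<Rightarrow> real) \<Rightarrow> bool" where
  "irreducible_chain P \<longleftrightarrow> (\<forall>i j. \<exists>n. mpow P n i j > 0)"

definition stationary_dist :: "('s::finite \<Rightarrow> 's \<Rightarrow> real) \<Rightarrow> ('s \<Rightarrow> real) \<Rightarrow> bool" where
  "stationary_dist P pst \<longleftrightarrow> (\<forall>j. 0 \<le> pst j) \<and> (\<Sum>j\<in>UNIV. pst j) = 1 \<and>
     (\<forall>j. pst j = (\<Sum>i\<in>UNIV. pst i * P i j))"

text \<open>Joint law of the state process X and the access process Ch:
  states evolve as a Markov chain with action-independent transition matrix P
  (arbitrary initial distribution); in state s, channel a is accessed with probability
  q s a, independently of the past.\<close>
definition access_process ::
  "'w measure \<Rightarrow> ('s::finite \<Rightarrow> 's \<Rightarrow> real) \<Rightarrow> ('s \<Rightarrow> 'c::finite \<Rightarrow> real)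
   \<Rightarrow> (nat \<Rightarrow> 'w \<Rightarrow> 's) \<Rightarrow> (nat \<Rightarrow> 'w \<Rightarrow> 'c) \<Rightarrow> bool" where
  "access_process M P q X Ch \<longleftrightarrow>
     (\<forall>n. X n \<in> measurable M (count_space UNIV)) \<and>
     (\<forall>n. Ch n \<in> measurable M (count_space UNIV)) \<and>
     (\<forall>n (s::nat \<Rightarrow> 's) (a::nat \<Rightarrow> 'c).
        measure M {\<omega>\<in>space M. \<forall>k\<le>n. X k \<omega> = s k \<and> Ch k \<omega> = a k}
        = measure M {\<omega>\<in>space M. X 0 \<omega> = s 0}
          * (\<Prod>k<n. q (s k) (a k) * P (s k) (s (Suc k))) * q (s n) (a n))"

definition avg_reward ::
  "('s \<Rightarrow> 'c \<Rightarrow> bool) \<Rightarrow> ('c \<Rightarrow> real) \<Rightarrow> (nat \<Rightarrow> 'w \<Rightarrow> 's) \<Rightarrow> (nat \<Rightarrow> 'w \<Rightarrow> 'c)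
   \<Rightarrow> 'w \<Rightarrow> nat \<Rightarrow> real" where
  "avg_reward idle C X Ch \<omega> n =
     (\<Sum>t<n. C (Ch t \<omega>) * of_bool (idle (X (Suc t) \<omega>) (Ch t \<omega>))) / real n"

end

theory Submission
  imports Defs "HOL-Library.Discrete_Functions"
begin
lemma mpow_nonneg: "stochastic_matrix P \<Longrightarrow> 0 \<le> mpow P n i j"
  by (induction n arbitrary: j) (auto simp: stochastic_matrix_def intro!: sum_nonneg)

lemma harmonic_const:
  fixes P :: "'s::finite \<Rightarrow> 's \<Rightarrow> real"
  assumes sto: "stochastic_matrix P" and irr: "irreducible_chain P"
    and h: "\<And>x. g x = (\<Sum>y\<in>UNIV. P x y * g y)"
  shows "g x = g y"
proof -
  define mx where "mx = Max (range g)"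
  have le: "g z \<le> mx" for z unfolding mx_def by simp
  have "mx \<in> range g" unfolding mx_def by (rule Max_in) auto
  then obtain x0 where x0: "g x0 = mx" by auto
  have step: "g k = mx \<Longrightarrow> P k z > 0 \<Longrightarrow> g z = mx" for k z
  proof -
    assume gk: "g k = mx" and pz: "P k z > 0"
    have "(\<Sum>y\<in>UNIV. P k y * (mx - g y)) = (\<Sum>y\<in>UNIV. P k y) * mx - (\<Sum>y\<in>UNIV. P k y * g y)"
      by (simp only: right_diff_distrib sum_subtractf sum_distrib_right)
    also have "\<dots> = 0" using sto h[of k] gk by (simp add: stochastic_matrix_def)
    finally have s0: "(\<Sum>y\<in>UNIV. P k y * (mx - g y)) = 0" .
    have "\<forall>y\<in>UNIV. P k y * (mx - g y) = 0"
      by (rule sum_nonneg_eq_0_iff[THEN iffD1, OF _ _ s0]) (use sto le in \<open>auto simp: stochastic_matrix_def\<close>)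
    then have "P k z * (mx - g z) = 0" by simp
    then show "g z = mx" using pz by simp
  qed
  have "mpow P n x0 z > 0 \<Longrightarrow> g z = mx" for n z
  proof (induction n arbitrary: z)
    case 0 then show ?case using x0 by (simp split: if_splits)
  next
    case (Suc n)
    then have "(\<Sum>k\<in>UNIV. mpow P n x0 k * P k z) > 0" by simp
    then have "\<exists>k. mpow P n x0 k * P k z > 0"
    proof (rule contrapos_pp)
      assume "\<not> (\<exists>k. mpow P n x0 k * P k z > 0)"
      then have "\<forall>k. mpow P n x0 k * P k z \<le> 0" by (simp add: not_less)
      then have "(\<Sum>k\<in>UNIV. mpow P n x0 k * P k z) \<le> 0" by (intro sum_nonpos) auto
      then show "\<not> (\<Sum>k\<in>UNIV. mpow P n x0 k * P k z) > 0" by simp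
    qed
    then obtain k where "mpow P n x0 k * P k z > 0" by blast
    moreover have "mpow P n x0 k \<ge> 0" by (rule mpow_nonneg[OF sto])
    moreover have "P k z \<ge> 0" using sto by (simp add: stochastic_matrix_def)
    ultimately have "mpow P n x0 k > 0" "P k z > 0"
      by (auto simp: zero_less_mult_iff)
    then show ?case using Suc.IH step by blast
  qed
  then have all: "g z = mx" for z using irr unfolding irreducible_chain_def by blast
  show ?thesis using all[of x] all[of y] by simp
qed

lemma poisson:
  fixes P :: "'s::finite \<Rightarrow> 's \<Rightarrow> real" and pst v :: "'s \<Rightarrow> real"
  assumes sto: "stochastic_matrix P" and irr: "irreducible_chain P"
    and st: "stationary_dist P pst" and v0: "(\<Sum>x\<in>UNIV. pst x * v x) = 0"
  shows "\<exists>g. \<forall>x. g x - (\<Sum>y\<in>UNIV. P x y * g y) = v x"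
proof -
  define L :: "real^'s \<Rightarrow> real^'s" where "L g = (\<chi> x. g$x - (\<Sum>y\<in>UNIV. P x y * g$y))" for g
  have stj: "\<And>y. (\<Sum>x\<in>UNIV. pst x * P x y) = pst y"
    using st unfolding stationary_dist_def by (metis (no_types))
  have linL: "linear L"
    by (rule linearI) (auto simp: L_def vec_eq_iff algebra_simps sum.distrib sum_distrib_left)
  obtain x0 :: 's where True by simp
  define H' where "H' = {g::real^'s. axis x0 1 \<bullet> g = 0}"
  define pv :: "real^'s" where "pv = (\<chi> x. pst x)"
  define H where "H = {w::real^'s. pv \<bullet> w = 0}"
  have pv0: "pv \<noteq> 0"
  proof
    assume "pv = 0"
    then have "pst x = 0" for x by (simp add: pv_def vec_eq_iff)
    moreover have "(\<Sum>j\<in>UNIV. pst j) = 1" using st unfolding stationary_dist_def by blast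
    ultimately show False by simp
  qed
  have dimH': "dim H' = CARD('s) - 1" unfolding H'_def by (subst dim_hyperplane) (auto simp: axis_eq_0_iff)
  have dimH: "dim H = CARD('s) - 1" unfolding H_def by (subst dim_hyperplane[OF pv0]) simp
  have subH': "subspace H'" unfolding H'_def by (rule subspace_hyperplane)
  have subH: "subspace H" unfolding H_def by (rule subspace_hyperplane)
  have inj: "inj_on L (span H')"
  proof (rule inj_onI)
    fix g h assume g: "g \<in> span H'" and h: "h \<in> span H'" and e: "L g = L h"
    have spH: "span H' = H'" by (rule span_eq_iff[THEN iffD2, OF subH'])
    have gH: "g \<in> H'" using g unfolding spH .
    have hH: "h \<in> H'" using h unfolding spH .
    have "g$x0 = 0" "h$x0 = 0" using gH hH unfolding H'_def by (simp_all only: mem_Collect_eq inner_axis' inner_real_def mult_1)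
    then have gh: "(g - h)$x0 = 0" by simp
    have "L (g - h) = L g - L h" by (rule linear_diff[OF linL])
    then have L0: "L (g - h) = 0" using e by simp
    have hm: "(g - h)$x = (\<Sum>y\<in>UNIV. P x y * (g - h)$y)" for x
    proof -
      have "(L (g - h))$x = 0" using L0 by simp
      then have "(g - h)$x - (\<Sum>y\<in>UNIV. P x y * (g - h)$y) = 0" by (simp only: L_def vec_lambda_beta)
      then show ?thesis by linarith
    qed
    have hc: "(g - h)$x = (g - h)$x0" for x
      by (rule harmonic_const[OF sto irr, where g="\<lambda>x. (g - h)$x"]) (rule hm)
    have "(g - h)$x = 0" for x using hc[of x] gh by (simp only:)
    then have "g$x = h$x" for x by simp
    then show "g = h" by (simp add: vec_eq_iff)
  qed
  have dimim: "dim (L ` H') = dim H'" by (rule dim_image_eq[OF linL inj])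
  have imsub: "L ` H' \<subseteq> H"
  proof
    fix w assume "w \<in> L ` H'"
    then obtain g where w: "w = L g" by auto
    have sw: "(\<Sum>x\<in>UNIV. \<Sum>y\<in>UNIV. pst x * (P x y * g$y)) = (\<Sum>y\<in>UNIV. (\<Sum>x\<in>UNIV. pst x * P x y) * g$y)"
      by (subst sum.swap) (simp only: sum_distrib_right mult.assoc)
    have "pv \<bullet> w = (\<Sum>x\<in>UNIV. pst x * (g$x - (\<Sum>y\<in>UNIV. P x y * g$y)))"
      by (simp only: w L_def pv_def inner_vec_def vec_lambda_beta inner_real_def)
    also have "\<dots> = (\<Sum>x\<in>UNIV. pst x * g$x) - (\<Sum>x\<in>UNIV. \<Sum>y\<in>UNIV. pst x * (P x y * g$y))"
      by (simp only: right_diff_distrib sum_subtractf sum_distrib_left)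
    also have "\<dots> = (\<Sum>x\<in>UNIV. pst x * g$x) - (\<Sum>y\<in>UNIV. (\<Sum>x\<in>UNIV. pst x * P x y) * g$y)"
      by (simp only: sw)
    also have "\<dots> = 0" by (simp only: stj diff_self)
    finally show "w \<in> H" by (simp add: H_def)
  qed
  have eq: "L ` H' = H"
    by (rule subspace_dim_equal[OF linear_subspace_image[OF linL subH'] subH imsub]) (simp add: dimim dimH dimH')
  have "(\<chi> x. v x) \<in> H" using v0 by (simp add: H_def pv_def inner_vec_def)
  then obtain g where "(\<chi> x. v x) = L g" using eq by auto
  then have "\<forall>x. g$x - (\<Sum>y\<in>UNIV. P x y * g$y) = v x" by (simp add: L_def vec_eq_iff)
  then show ?thesis by blast
qed


lemma real_aux:
  fixes a c N K B :: real
  assumes K1: "K \<ge> 1" and h1: "K^2 \<le> N" and h2: "N \<le> K^2 + 2*K"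
    and d1: "\<bar>a - c\<bar> \<le> 2*B*K" and d2: "\<bar>c\<bar> \<le> B*K^2"
  shows "\<bar>a/N - c/K^2\<bar> \<le> 4*B/K"
proof -
  have K0: "K > 0" using K1 by simp
  have N0: "N > 0" using h1 K0 by (smt (verit) zero_less_power)
  have "0 \<le> B*K^2" using d2 by (meson abs_ge_zero order_trans)
  then have B0: "B \<ge> 0" using K0 by (simp add: zero_le_mult_iff)
  have eq: "a/N - c/K^2 = ((a - c)*K^2 + c*(K^2 - N))/(N*K^2)"
    using K0 N0 by (simp add: field_simps)
  have "\<bar>(a - c)*K^2 + c*(K^2 - N)\<bar> \<le> \<bar>(a - c)*K^2\<bar> + \<bar>c*(K^2 - N)\<bar>" by (rule abs_triangle_ineq)
  also have "\<dots> = \<bar>a - c\<bar>*K^2 + \<bar>c\<bar>*(N - K^2)"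
    using h1 by (simp add: abs_mult abs_of_nonpos)
  also have "\<dots> \<le> (2*B*K)*K^2 + (B*K^2)*(2*K)"
    by (intro add_mono mult_mono d1 d2) (use h1 h2 B0 K0 in auto)
  also have "\<dots> = 4*B*K * K^2" by (simp add: algebra_simps)
  finally have num: "\<bar>(a - c)*K^2 + c*(K^2 - N)\<bar> \<le> 4*B*K * K^2" .
  have "\<bar>a/N - c/K^2\<bar> = \<bar>(a - c)*K^2 + c*(K^2 - N)\<bar> / (N*K^2)"
    using eq N0 K0 by (simp add: abs_divide abs_mult)
  also have "\<dots> \<le> 4*B*K * K^2 / (N*K^2)"
    by (rule divide_right_mono[OF num]) (use N0 K0 in simp)
  also have "\<dots> = 4*B*K / N" using K0 by simp
  also have "\<dots> \<le> 4*B*K / K^2"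
    by (rule divide_left_mono) (use B0 K0 h1 N0 in auto)
  also have "\<dots> = 4*B/K" using K0 by (simp add: power2_eq_square)
  finally show ?thesis .
qed

lemma interp:
  fixes A :: "nat \<Rightarrow> real"
  assumes inc: "\<And>n. \<bar>A (Suc n) - A n\<bar> \<le> B" and A0: "A 0 = 0"
    and lim: "(\<lambda>k. A ((Suc k)^2) / real ((Suc k)^2)) \<longlonglongrightarrow> 0"
  shows "(\<lambda>n. A n / real n) \<longlonglongrightarrow> 0"
proof -
  have diff: "\<bar>A n - A m\<bar> \<le> B * real (n - m)" if "m \<le> n" for m n
    using that
  proof (induction n rule: dec_induct)
    case base then show ?case by simp
  next
    case (step n)
    have "\<bar>A (Suc n) - A m\<bar> \<le> \<bar>A (Suc n) - A n\<bar> + \<bar>A n - A m\<bar>" by simp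
    also have "\<dots> \<le> B + B * real (n - m)" using inc step.IH by (rule add_mono)
    also have "\<dots> = B * real (Suc n - m)" using step.hyps by (simp add: Suc_diff_le algebra_simps)
    finally show ?case .
  qed
  define r where "r n = floor_sqrt n" for n
  have r_top: "filterlim r at_top sequentially"
    unfolding filterlim_at_top eventually_sequentially
    by (metis le_floor_sqrtI order_trans power2_nat_le_imp_le r_def le_refl)
  have g0: "(\<lambda>k. A (k^2) / real (k^2)) \<longlonglongrightarrow> 0"
    by (rule LIMSEQ_imp_Suc) (use lim in simp)
  have g: "(\<lambda>n. A ((r n)^2) / real ((r n)^2)) \<longlonglongrightarrow> 0"
    using filterlim_compose[OF g0 r_top] by (simp add: o_def)
  have rr: "filterlim (\<lambda>n. real (r n)) at_infinity sequentially"
    by (rule filterlim_at_top_imp_at_infinity, rule filterlim_compose[OF filterlim_real_sequentially r_top])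
  have h4: "(\<lambda>n. 4*B / real (r n)) \<longlonglongrightarrow> 0"
    by (rule tendsto_divide_0[OF tendsto_const rr])
  have bnd: "\<bar>A n / real n - A ((r n)^2) / real ((r n)^2)\<bar> \<le> 4*B / real (r n)" if n1: "n \<ge> 1" for n
  proof -
    define k where "k = r n"
    have k1: "k \<ge> 1" using n1 unfolding k_def r_def by (simp add: Suc_le_eq)
    have hk: "k^2 \<le> n" unfolding k_def r_def by simp
    have hn: "n < (Suc k)^2" unfolding k_def r_def by (rule Suc_floor_sqrt_power2_gt)
    then have hn': "n \<le> k^2 + 2*k" by (simp add: power2_eq_square)
    have d1: "\<bar>A n - A (k^2)\<bar> \<le> 2*B*real k"
    proof -
      have "\<bar>A n - A (k^2)\<bar> \<le> B * real (n - k^2)" using diff[OF hk] .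
      also have "\<dots> \<le> B * real (2*k)"
      proof (rule mult_left_mono)
        have "n - k^2 \<le> 2*k" using hn' by arith
        then show "real (n - k^2) \<le> real (2*k)" by (simp only: of_nat_le_iff)
        show "0 \<le> B" by (meson abs_ge_zero order_trans inc)
      qed
      finally show ?thesis by simp
    qed
    have d2: "\<bar>A (k^2)\<bar> \<le> B * (real k)^2" using diff[of 0 "k^2"] A0 by simp
    have "\<bar>A n / real n - A (k^2) / (real k)^2\<bar> \<le> 4*B/real k"
      by (rule real_aux) (use k1 hk hn' d1 d2 in \<open>auto simp: of_nat_power[symmetric] simp del: of_nat_power\<close>)
    then show ?thesis unfolding k_def by simp
  qed
  have diff0: "(\<lambda>n. A n / real n - A ((r n)^2) / real ((r n)^2)) \<longlonglongrightarrow> 0"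
    by (rule Lim_null_comparison[OF _ h4]) (use bnd in \<open>auto simp: eventually_sequentially\<close>)
  have "(\<lambda>n. (A n / real n - A ((r n)^2) / real ((r n)^2)) + A ((r n)^2) / real ((r n)^2)) \<longlonglongrightarrow> 0 + 0"
    by (rule tendsto_add[OF diff0 g])
  then show ?thesis by simp
qed



locale ap = prob_space M for M :: "'w measure" +
  fixes P :: "'s::finite \<Rightarrow> 's \<Rightarrow> real" and q :: "'s \<Rightarrow> 'c::finite \<Rightarrow> real"
    and X :: "nat \<Rightarrow> 'w \<Rightarrow> 's" and Ch :: "nat \<Rightarrow> 'w \<Rightarrow> 'c"
  assumes sto: "stochastic_matrix P" and qd: "\<And>s a. 0 \<le> q s a"
    and qs: "\<And>s. (\<Sum>a\<in>UNIV. q s a) = 1" and acc: "access_process M P q X Ch"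
begin

lemma X_meas[measurable]: "X n \<in> measurable M (count_space UNIV)"
  using acc unfolding access_process_def by auto
lemma Ch_meas[measurable]: "Ch n \<in> measurable M (count_space UNIV)"
  using acc unfolding access_process_def by auto

definition nu :: "'s \<Rightarrow> real" where "nu x = measure M {\<omega>\<in>space M. X 0 \<omega> = x}"

definition wt :: "nat \<Rightarrow> (nat \<Rightarrow> 's) \<Rightarrow> (nat \<Rightarrow> 'c) \<Rightarrow> real" where
  "wt n s a = (\<Prod>k<n. q (s k) (a k) * P (s k) (s (Suc k)))"

lemma cyl: "measure M {\<omega>\<in>space M. \<forall>k\<le>n. X k \<omega> = s k \<and> Ch k \<omega> = a k}
   = nu (s 0) * wt n s a * q (s n) (a n)"
  using acc unfolding access_process_def nu_def wt_def by auto

lemma pcyl: "measure M {\<omega>\<in>space M. \<forall>k\<le>n. X k \<omega> = s k \<and> (k<n \<longrightarrow> Ch k \<omega> = a k)}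
   = nu (s 0) * wt n s a"
proof -
  let ?A = "\<lambda>b. {\<omega>\<in>space M. \<forall>k\<le>n. X k \<omega> = s k \<and> Ch k \<omega> = (a(n:=b)) k}"
  have eq: "{\<omega>\<in>space M. \<forall>k\<le>n. X k \<omega> = s k \<and> (k<n \<longrightarrow> Ch k \<omega> = a k)} = (\<Union>b\<in>UNIV. ?A b)"
    by (auto simp: less_le)
  have "measure M (\<Union>b\<in>UNIV. ?A b) = (\<Sum>b\<in>UNIV. measure M (?A b))"
    by (rule measure_finite_Union) (auto simp: disjoint_family_on_def)
  also have "\<dots> = (\<Sum>b\<in>UNIV. nu (s 0) * wt n s a * q (s n) b)"
  proof (rule sum.cong[OF refl])
    fix b
    have "wt n s (a(n:=b)) = wt n s a" unfolding wt_def by (rule prod.cong) auto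
    then show "measure M (?A b) = nu (s 0) * wt n s a * q (s n) b" by (subst cyl) simp
  qed
  also have "\<dots> = nu (s 0) * wt n s a" by (simp add: sum_distrib_left[symmetric] qs)
  finally show ?thesis using eq by simp
qed

lemma sum_prod_split: "finite A \<Longrightarrow> finite B \<Longrightarrow> (\<Sum>v\<in>A\<times>B. h v) = (\<Sum>x\<in>A. \<Sum>y\<in>B. h (x,y))"
  by (simp add: sum.cartesian_product)

lemma int_finite_rv:
  assumes "finite S" "\<And>\<omega>. \<omega>\<in>space M \<Longrightarrow> W \<omega> \<in> S"
    "\<And>v. v\<in>S \<Longrightarrow> {\<omega>\<in>space M. W \<omega> = v} \<in> sets M"
  shows "integral\<^sup>L M (\<lambda>\<omega>. F (W \<omega>) :: real) = (\<Sum>v\<in>S. F v * measure M {\<omega>\<in>space M. W \<omega> = v})"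
proof -
  have "integral\<^sup>L M (\<lambda>\<omega>. F (W \<omega>)) = integral\<^sup>L M (\<lambda>\<omega>. \<Sum>v\<in>S. F v * indicator {\<omega>\<in>space M. W \<omega> = v} \<omega>)"
  proof (rule Bochner_Integration.integral_cong[OF refl])
    fix \<omega> assume "\<omega> \<in> space M"
    then show "F (W \<omega>) = (\<Sum>v\<in>S. F v * indicator {\<omega>\<in>space M. W \<omega> = v} \<omega>)"
      using assms(1,2) by (simp add: indicator_def sum.delta)
  qed
  also have "\<dots> = (\<Sum>v\<in>S. integral\<^sup>L M (\<lambda>\<omega>. F v * indicator {\<omega>\<in>space M. W \<omega> = v} \<omega>))"
    by (rule Bochner_Integration.integral_sum) (auto intro!: integrable_real_indicator assms(3) simp: less_top[symmetric])
  also have "\<dots> = (\<Sum>v\<in>S. F v * measure M {\<omega>\<in>space M. W \<omega> = v})"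
    by (rule sum.cong) (auto simp: Int_absorb2)
  finally show ?thesis .
qed

lemma restrict_eq_iff: "g \<in> extensional A \<Longrightarrow> (restrict f A = g) \<longleftrightarrow> (\<forall>k\<in>A. f k = g k)"
  by (auto simp: restrict_def extensional_def fun_eq_iff)

lemma orth:
  assumes "s0 < t" and psi0: "\<And>x. (\<Sum>b\<in>UNIV. \<Sum>y\<in>UNIV. q x b * P x y * \<phi>2 x b y) = 0"
  shows "integral\<^sup>L M (\<lambda>\<omega>. \<phi>1 (X s0 \<omega>) (Ch s0 \<omega>) (X (Suc s0) \<omega>) * \<phi>2 (X t \<omega>) (Ch t \<omega>) (X (Suc t) \<omega>) :: real) = 0"
proof -
  define A where "A = (PiE {..t} (\<lambda>_. UNIV::'s set)) \<times> (PiE {..<t} (\<lambda>_. UNIV::'c set))"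
  define W where "W \<omega> = ((restrict (\<lambda>k. X k \<omega>) {..t}, restrict (\<lambda>k. Ch k \<omega>) {..<t}), Ch t \<omega>, X (Suc t) \<omega>)" for \<omega>
  define F where "F = (\<lambda>((sv,av),b,y). \<phi>1 (sv s0) (av s0) (sv (Suc s0)) * \<phi>2 (sv t) b y)"
  have finA: "finite A" unfolding A_def by (auto intro!: finite_PiE)
  have setW: "{\<omega>\<in>space M. W \<omega> = ((sv,av),b,y)} = {\<omega>\<in>space M. \<forall>k\<le>Suc t. X k \<omega> = (sv(Suc t:=y)) k \<and> (k<Suc t \<longrightarrow> Ch k \<omega> = (av(t:=b)) k)}"
    if "(sv,av) \<in> A" for sv av b y
  proof -
    have e1: "sv \<in> extensional {..t}" "av \<in> extensional {..<t}" using that unfolding A_def by (auto simp: PiE_def)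
    show ?thesis unfolding W_def using e1
      by (auto simp: restrict_eq_iff le_Suc_eq less_Suc_eq)
  qed
  have wtS: "wt (Suc t) (sv(Suc t:=y)) (av(t:=b)) = wt t sv av * (q (sv t) b * P (sv t) y)" for sv av b y
  proof -
    have "(\<Prod>k<t. q ((sv(Suc t:=y)) k) ((av(t:=b)) k) * P ((sv(Suc t:=y)) k) ((sv(Suc t:=y)) (Suc k)))
        = (\<Prod>k<t. q (sv k) (av k) * P (sv k) (sv (Suc k)))"
      by (rule prod.cong) auto
    then show ?thesis unfolding wt_def by simp
  qed
  have "integral\<^sup>L M (\<lambda>\<omega>. \<phi>1 (X s0 \<omega>) (Ch s0 \<omega>) (X (Suc s0) \<omega>) * \<phi>2 (X t \<omega>) (Ch t \<omega>) (X (Suc t) \<omega>))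
      = integral\<^sup>L M (\<lambda>\<omega>. F (W \<omega>))"
    using assms(1) by (simp add: F_def W_def)
  also have "\<dots> = (\<Sum>v\<in>A \<times> UNIV \<times> UNIV. F v * measure M {\<omega>\<in>space M. W \<omega> = v})"
  proof (rule int_finite_rv)
    show "finite (A \<times> (UNIV::'c set) \<times> (UNIV::'s set))" using finA by (intro finite_cartesian_product) auto
    show "W \<omega> \<in> A \<times> (UNIV::'c set) \<times> (UNIV::'s set)" for \<omega> unfolding W_def A_def by auto
    fix v assume "v \<in> A \<times> (UNIV::'c set) \<times> (UNIV::'s set)"
    then obtain sv av b y where v: "v = ((sv,av),b,y)" "(sv,av) \<in> A" by auto
    show "{\<omega>\<in>space M. W \<omega> = v} \<in> sets M" unfolding v(1) setW[OF v(2)] by measurable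
  qed
  also have "\<dots> = (\<Sum>x\<in>A. \<Sum>by\<in>UNIV \<times> UNIV. F (x,by) * measure M {\<omega>\<in>space M. W \<omega> = (x,by)})"
    using finA by (subst sum_prod_split) auto
  also have "\<dots> = (\<Sum>x\<in>A. 0)"
  proof (rule sum.cong[OF refl])
    fix x assume xA: "x \<in> A"
    obtain sv av where x: "x = (sv,av)" by fastforce
    have "(\<Sum>by\<in>UNIV \<times> UNIV. F (x,by) * measure M {\<omega>\<in>space M. W \<omega> = (x,by)})
       = (\<Sum>b\<in>UNIV. \<Sum>y\<in>UNIV. F (x,(b,y)) * measure M {\<omega>\<in>space M. W \<omega> = (x,(b,y))})"
      by (subst sum_prod_split) auto
    also have "\<dots> = (\<Sum>b\<in>UNIV. \<Sum>y\<in>UNIV. (\<phi>1 (sv s0) (av s0) (sv (Suc s0)) * nu (sv 0) * wt t sv av) * (q (sv t) b * P (sv t) y * \<phi>2 (sv t) b y))"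
      using xA unfolding x
      by (intro sum.cong refl) (simp only: setW[OF xA[unfolded x]] pcyl wtS, simp add: F_def)
    also have "\<dots> = (\<phi>1 (sv s0) (av s0) (sv (Suc s0)) * nu (sv 0) * wt t sv av) * (\<Sum>b\<in>UNIV. \<Sum>y\<in>UNIV. q (sv t) b * P (sv t) y * \<phi>2 (sv t) b y)"
      by (simp add: sum_distrib_left)
    also have "\<dots> = 0" using psi0 by simp
    finally show "(\<Sum>by\<in>UNIV \<times> UNIV. F (x,by) * measure M {\<omega>\<in>space M. W \<omega> = (x,by)}) = 0" .
  qed
  finally show ?thesis by simp
qed

lemma sq_bound:
  assumes psi0: "\<And>x. (\<Sum>b\<in>UNIV. \<Sum>y\<in>UNIV. q x b * P x y * \<phi> x b y) = 0"
    and bd: "\<And>x b y. \<bar>\<phi> x b y\<bar> \<le> B"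
  shows "integral\<^sup>L M (\<lambda>\<omega>. (\<Sum>t<n. \<phi> (X t \<omega>) (Ch t \<omega>) (X (Suc t) \<omega>))^2) \<le> real n * B^2"
proof -
  define D where "D t \<omega> = \<phi> (X t \<omega>) (Ch t \<omega>) (X (Suc t) \<omega>)" for t \<omega>
  have Dm[measurable]: "D t \<in> borel_measurable M" for t unfolding D_def by measurable
  have B0: "0 \<le> B" by (meson abs_ge_zero order_trans bd)
  have Db: "\<bar>D t \<omega>\<bar> \<le> B" for t \<omega> unfolding D_def by (rule bd)
  have int: "integrable M (\<lambda>\<omega>. D s \<omega> * D t \<omega>)" for s t
    by (rule integrable_const_bound[where B="B*B"]) (auto simp: abs_mult intro!: mult_mono Db B0)
  have E: "integral\<^sup>L M (\<lambda>\<omega>. D s \<omega> * D t \<omega>) \<le> (if s = t then B^2 else 0)" for s t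
  proof (cases "s = t")
    case True
    have "integral\<^sup>L M (\<lambda>\<omega>. D s \<omega> * D t \<omega>) \<le> integral\<^sup>L M (\<lambda>\<omega>. B^2)"
    proof (rule integral_mono[OF int integrable_const])
      fix \<omega> show "D s \<omega> * D t \<omega> \<le> B^2"
      proof -
        have "D s \<omega> * D t \<omega> = \<bar>D t \<omega>\<bar> * \<bar>D t \<omega>\<bar>" using True by (simp only: abs_mult_self_eq)
        also have "\<dots> \<le> B * B" by (rule mult_mono[OF Db Db B0 abs_ge_zero])
        finally show ?thesis by (simp only: power2_eq_square)
      qed
    qed
    then show ?thesis using True by (simp add: prob_space)
  next
    case False
    then consider "s < t" | "t < s" by linarith
    then have "integral\<^sup>L M (\<lambda>\<omega>. D s \<omega> * D t \<omega>) = 0"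
    proof cases
      case 1 then show ?thesis unfolding D_def by (rule orth) (rule psi0)
    next
      case 2
      have "integral\<^sup>L M (\<lambda>\<omega>. D s \<omega> * D t \<omega>) = integral\<^sup>L M (\<lambda>\<omega>. D t \<omega> * D s \<omega>)"
        by (simp add: mult.commute)
      also have "\<dots> = 0" using 2 unfolding D_def by (rule orth) (rule psi0)
      finally show ?thesis .
    qed
    then show ?thesis using False by simp
  qed
  have "integral\<^sup>L M (\<lambda>\<omega>. (\<Sum>t<n. \<phi> (X t \<omega>) (Ch t \<omega>) (X (Suc t) \<omega>))^2)
      = integral\<^sup>L M (\<lambda>\<omega>. \<Sum>s<n. \<Sum>t<n. D s \<omega> * D t \<omega>)"
    by (simp add: D_def power2_eq_square sum_product)
  also have "\<dots> = (\<Sum>s<n. integral\<^sup>L M (\<lambda>\<omega>. \<Sum>t<n. D s \<omega> * D t \<omega>))"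
    by (rule Bochner_Integration.integral_sum) (intro Bochner_Integration.integrable_sum int)
  also have "\<dots> = (\<Sum>s<n. \<Sum>t<n. integral\<^sup>L M (\<lambda>\<omega>. D s \<omega> * D t \<omega>))"
    by (intro sum.cong refl Bochner_Integration.integral_sum int)
  also have "\<dots> \<le> (\<Sum>s<n. \<Sum>t<n. (if s = t then B^2 else 0))"
    by (intro sum_mono E)
  also have "\<dots> = real n * B^2" by simp
  finally show ?thesis .
qed

lemma slln:
  assumes psi0: "\<And>x. (\<Sum>b\<in>UNIV. \<Sum>y\<in>UNIV. q x b * P x y * \<phi> x b y) = 0"
    and bd: "\<And>x b y. \<bar>\<phi> x b y\<bar> \<le> B"
  shows "AE \<omega> in M. (\<lambda>n. (\<Sum>t<n. \<phi> (X t \<omega>) (Ch t \<omega>) (X (Suc t) \<omega>)) / real n) \<longlonglongrightarrow> 0"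
proof -
  define S where "S n \<omega> = (\<Sum>t<n. \<phi> (X t \<omega>) (Ch t \<omega>) (X (Suc t) \<omega>))" for n \<omega>
  have Sm[measurable]: "S n \<in> borel_measurable M" for n unfolding S_def by measurable
  define Z where "Z k \<omega> = (S ((Suc k)^2) \<omega> / real ((Suc k)^2))^2" for k \<omega>
  have Zm[measurable]: "Z k \<in> borel_measurable M" for k unfolding Z_def by measurable
  have B0: "0 \<le> B" by (meson abs_ge_zero order_trans bd)
  have Sb: "\<bar>S n \<omega>\<bar> \<le> real n * B" for n \<omega>
  proof -
    have "\<bar>S n \<omega>\<bar> \<le> (\<Sum>t<n. \<bar>\<phi> (X t \<omega>) (Ch t \<omega>) (X (Suc t) \<omega>)\<bar>)" unfolding S_def by (rule sum_abs)
    also have "\<dots> \<le> (\<Sum>t<n. B)" by (intro sum_mono bd)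
    finally show ?thesis by simp
  qed
  have Z0: "0 \<le> Z k \<omega>" for k \<omega> unfolding Z_def by simp
  have Zb: "\<bar>Z k \<omega>\<bar> \<le> B^2" for k \<omega>
  proof -
    have "\<bar>S ((Suc k)^2) \<omega> / real ((Suc k)^2)\<bar> \<le> B"
    proof -
      define N where "N = real ((Suc k)^2)"
      have N0: "N > 0" unfolding N_def by simp
      have sb: "\<bar>S ((Suc k)^2) \<omega>\<bar> \<le> B * N" using Sb[of "(Suc k)^2" \<omega>] unfolding N_def by (simp only: mult.commute)
      have "\<bar>S ((Suc k)^2) \<omega> / N\<bar> = \<bar>S ((Suc k)^2) \<omega>\<bar> / N" using N0 by (simp add: abs_divide)
      also have "\<dots> \<le> B" using sb N0 by (simp only: pos_divide_le_eq)
      finally show ?thesis unfolding N_def .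
    qed
    then have "\<bar>S ((Suc k)^2) \<omega> / real ((Suc k)^2)\<bar>^2 \<le> B^2" by (rule power_mono) simp
    then show ?thesis unfolding Z_def by (simp only: power2_abs abs_power2)
  qed
  have intZ: "integrable M (Z k)" for k
    by (rule integrable_const_bound[where B="B^2"]) (auto simp: Zb)
  have EZ: "integral\<^sup>L M (Z k) \<le> B^2 / real ((Suc k)^2)" for k
  proof -
    define N where "N = real ((Suc k)^2)"
    have N0: "N > 0" unfolding N_def by simp
    have "integral\<^sup>L M (Z k) = integral\<^sup>L M (\<lambda>\<omega>. (S ((Suc k)^2) \<omega>)^2) / N^2"
      unfolding Z_def N_def[symmetric] by (simp add: power_divide)
    also have "\<dots> \<le> (N * B^2) / N^2"
      by (rule divide_right_mono) (use sq_bound[OF psi0 bd, of "(Suc k)^2"] in \<open>simp_all add: S_def N_def\<close>)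
    also have "\<dots> = B^2 / N" using N0 by (simp add: power2_eq_square)
    finally show ?thesis unfolding N_def .
  qed
  have summ: "summable (\<lambda>k. B^2 / real ((Suc k)^2))"
  proof -
    have "summable (\<lambda>k. inverse (real k ^ 2))" by (rule inverse_power_summable) simp
    then have "summable (\<lambda>k. inverse (real (Suc k) ^ 2))" by (subst summable_Suc_iff)
    then have "summable (\<lambda>k. B^2 * inverse (real (Suc k) ^ 2))" by (rule summable_mult)
    then show ?thesis by (simp add: divide_inverse del: of_nat_Suc)
  qed
  have "(\<integral>\<^sup>+\<omega>. (\<Sum>k. ennreal (Z k \<omega>)) \<partial>M) = (\<Sum>k. \<integral>\<^sup>+\<omega>. ennreal (Z k \<omega>) \<partial>M)"
    by (rule nn_integral_suminf) measurable
  also have "\<dots> = (\<Sum>k. ennreal (integral\<^sup>L M (Z k)))"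
    by (subst nn_integral_eq_integral[OF intZ]) (auto simp: Z0)
  also have "\<dots> \<le> (\<Sum>k. ennreal (B^2 / real ((Suc k)^2)))"
    by (intro suminf_le summableI ennreal_leI EZ)
  also have "\<dots> = ennreal (\<Sum>k. B^2 / real ((Suc k)^2))"
    by (rule suminf_ennreal2[OF _ summ]) simp
  finally have fin0: "(\<integral>\<^sup>+\<omega>. (\<Sum>k. ennreal (Z k \<omega>)) \<partial>M) \<le> ennreal (\<Sum>k. B^2 / real ((Suc k)^2))" .
  have fin: "(\<integral>\<^sup>+\<omega>. (\<Sum>k. ennreal (Z k \<omega>)) \<partial>M) \<noteq> \<infinity>"
    unfolding infinity_ennreal_def by (rule neq_top_trans[OF ennreal_neq_top fin0])
  have "AE \<omega> in M. (\<Sum>k. ennreal (Z k \<omega>)) \<noteq> \<infinity>"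
    by (rule nn_integral_PInf_AE[OF _ fin]) measurable
  then show ?thesis
  proof (rule AE_mp, intro AE_I2 impI)
    fix \<omega> assume "(\<Sum>k. ennreal (Z k \<omega>)) \<noteq> \<infinity>"
    then have "summable (\<lambda>k. Z k \<omega>)" by (intro summable_suminf_not_top Z0) simp
    then have "(\<lambda>k. Z k \<omega>) \<longlonglongrightarrow> 0" by (rule summable_LIMSEQ_zero)
    then have "(\<lambda>k. sqrt (Z k \<omega>)) \<longlonglongrightarrow> sqrt 0" by (rule tendsto_real_sqrt)
    then have "(\<lambda>k. \<bar>S ((Suc k)^2) \<omega> / real ((Suc k)^2)\<bar>) \<longlonglongrightarrow> 0" by (simp add: Z_def del: of_nat_Suc of_nat_power)
    then have lim: "(\<lambda>k. S ((Suc k)^2) \<omega> / real ((Suc k)^2)) \<longlonglongrightarrow> 0" by (simp only: tendsto_rabs_zero_iff)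
    have "(\<lambda>n. S n \<omega> / real n) \<longlonglongrightarrow> 0"
      by (rule interp[where B=B, OF _ _ lim]) (auto simp: S_def bd)
    then show "(\<lambda>n. (\<Sum>t<n. \<phi> (X t \<omega>) (Ch t \<omega>) (X (Suc t) \<omega>)) / real n) \<longlonglongrightarrow> 0" by (simp add: S_def)
  qed
qed

lemma ergodic:
  assumes irr: "irreducible_chain P" and st: "stationary_dist P pst"
  shows "AE \<omega> in M. (\<lambda>n. avg_reward idle C X Ch \<omega> n) \<longlonglongrightarrow>
     (\<Sum>x\<in>UNIV. pst x * (\<Sum>a\<in>UNIV. \<Sum>y\<in>UNIV. q x a * P x y * (C a * of_bool (idle y a))))"
proof -
  define f where "f x a y = C a * of_bool (idle y a)" for x :: 's and a y
  define h where "h x = (\<Sum>a\<in>UNIV. \<Sum>y\<in>UNIV. q x a * P x y * f x a y)" for x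
  define mu where "mu = (\<Sum>x\<in>UNIV. pst x * h x)"
  have pst1: "(\<Sum>x\<in>UNIV. pst x) = 1" using st unfolding stationary_dist_def by blast
  have rowP: "(\<Sum>y\<in>UNIV. P x y) = 1" for x using sto unfolding stationary_dist_def stochastic_matrix_def by blast
  have "(\<Sum>x\<in>UNIV. pst x * (h x - mu)) = (\<Sum>x\<in>UNIV. pst x * h x) - (\<Sum>x\<in>UNIV. pst x) * mu"
    by (simp only: right_diff_distrib sum_subtractf sum_distrib_right)
  also have "\<dots> = 0" by (simp only: pst1 mu_def[symmetric] mult_1 diff_self)
  finally have v0: "(\<Sum>x\<in>UNIV. pst x * (h x - mu)) = 0" .
  obtain g where g: "\<And>x. g x - (\<Sum>y\<in>UNIV. P x y * g y) = h x - mu"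
    using poisson[OF sto irr st v0] by blast
  define Pg where "Pg x = (\<Sum>y\<in>UNIV. P x y * g y)" for x
  define \<phi> where "\<phi> x a y = f x a y - h x + g y - Pg x" for x a y
  have psi0: "(\<Sum>b\<in>UNIV. \<Sum>y\<in>UNIV. q x b * P x y * \<phi> x b y) = 0" for x
  proof -
    have "(\<Sum>b\<in>UNIV. \<Sum>y\<in>UNIV. q x b * P x y * \<phi> x b y)
       = (\<Sum>b\<in>UNIV. \<Sum>y\<in>UNIV. q x b * P x y * f x b y) - (\<Sum>b\<in>UNIV. q x b * (\<Sum>y\<in>UNIV. P x y)) * h x
         + (\<Sum>b\<in>UNIV. q x b * (\<Sum>y\<in>UNIV. P x y * g y)) - (\<Sum>b\<in>UNIV. q x b * (\<Sum>y\<in>UNIV. P x y)) * Pg x"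
      unfolding \<phi>_def
      by (simp add: algebra_simps sum_subtractf sum.distrib sum_distrib_left sum_distrib_right)
    also have "\<dots> = 0" by (simp add: rowP qs h_def[symmetric] Pg_def[symmetric] sum_distrib_right[symmetric])
    finally show ?thesis .
  qed
  define B where "B = (\<Sum>x\<in>UNIV. \<Sum>b\<in>UNIV. \<Sum>y\<in>UNIV. \<bar>\<phi> x b y\<bar>)"
  have bd: "\<bar>\<phi> x b y\<bar> \<le> B" for x b y
  proof -
    have "\<bar>\<phi> x b y\<bar> \<le> (\<Sum>y\<in>UNIV. \<bar>\<phi> x b y\<bar>)" by (rule member_le_sum) auto
    also have "\<dots> \<le> (\<Sum>b\<in>UNIV. \<Sum>y\<in>UNIV. \<bar>\<phi> x b y\<bar>)" by (rule member_le_sum) (auto intro: sum_nonneg)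
    also have "\<dots> \<le> B" unfolding B_def by (rule member_le_sum) (auto intro: sum_nonneg)
    finally show ?thesis .
  qed
  define G where "G = (\<Sum>x\<in>UNIV. \<bar>g x\<bar>)"
  have gb: "\<bar>g x\<bar> \<le> G" for x unfolding G_def by (rule member_le_sum) auto
  have ident: "(\<Sum>t<n. f (X t \<omega>) (Ch t \<omega>) (X (Suc t) \<omega>))
      = (\<Sum>t<n. \<phi> (X t \<omega>) (Ch t \<omega>) (X (Suc t) \<omega>)) + real n * mu + (g (X 0 \<omega>) - g (X n \<omega>))" for n \<omega>
  proof (induction n)
    case 0 then show ?case by simp
  next
    case (Suc n)
    have hx: "h (X n \<omega>) = mu + g (X n \<omega>) - Pg (X n \<omega>)" using g[of "X n \<omega>"] unfolding Pg_def by linarith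
    show ?case using Suc.IH hx by (simp add: \<phi>_def algebra_simps)
  qed
  have c0: "(\<lambda>n. (g (X 0 \<omega>) - g (X n \<omega>)) / real n) \<longlonglongrightarrow> 0" for \<omega>
  proof (rule Lim_null_comparison)
    show "\<forall>\<^sub>F n in sequentially. norm ((g (X 0 \<omega>) - g (X n \<omega>)) / real n) \<le> 2 * G / real n"
    proof (rule always_eventually, rule allI)
      fix n
      have "\<bar>g (X 0 \<omega>) - g (X n \<omega>)\<bar> \<le> 2 * G" using gb[of "X 0 \<omega>"] gb[of "X n \<omega>"] by linarith
      then show "norm ((g (X 0 \<omega>) - g (X n \<omega>)) / real n) \<le> 2 * G / real n"
        by (simp add: abs_divide divide_right_mono)
    qed
    show "(\<lambda>n. 2 * G / real n) \<longlonglongrightarrow> 0" by (rule lim_const_over_n)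
  qed
  show ?thesis
    using slln[OF psi0 bd]
  proof (rule AE_mp, intro AE_I2 impI)
    fix \<omega>
    assume l: "(\<lambda>n. (\<Sum>t<n. \<phi> (X t \<omega>) (Ch t \<omega>) (X (Suc t) \<omega>)) / real n) \<longlonglongrightarrow> 0"
    have lim: "(\<lambda>n. (\<Sum>t<n. \<phi> (X t \<omega>) (Ch t \<omega>) (X (Suc t) \<omega>)) / real n + mu + (g (X 0 \<omega>) - g (X n \<omega>)) / real n)
        \<longlonglongrightarrow> 0 + mu + 0"
      by (intro tendsto_add l c0 tendsto_const)
    have ev: "\<forall>\<^sub>F n in sequentially. (\<Sum>t<n. \<phi> (X t \<omega>) (Ch t \<omega>) (X (Suc t) \<omega>)) / real n + mu + (g (X 0 \<omega>) - g (X n \<omega>)) / real n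
        = avg_reward idle C X Ch \<omega> n"
      unfolding eventually_sequentially
    proof (intro exI allI impI)
      fix n :: nat assume n1: "n \<ge> 1"
      have "avg_reward idle C X Ch \<omega> n = (\<Sum>t<n. f (X t \<omega>) (Ch t \<omega>) (X (Suc t) \<omega>)) / real n"
        unfolding avg_reward_def f_def ..
      also have "\<dots> = ((\<Sum>t<n. \<phi> (X t \<omega>) (Ch t \<omega>) (X (Suc t) \<omega>)) + real n * mu + (g (X 0 \<omega>) - g (X n \<omega>))) / real n"
        by (simp only: ident)
      also have "\<dots> = (\<Sum>t<n. \<phi> (X t \<omega>) (Ch t \<omega>) (X (Suc t) \<omega>)) / real n + mu + (g (X 0 \<omega>) - g (X n \<omega>)) / real n"
        using n1 by (simp add: add_divide_distrib)
      finally show "(\<Sum>t<n. \<phi> (X t \<omega>) (Ch t \<omega>) (X (Suc t) \<omega>)) / real n + mu + (g (X 0 \<omega>) - g (X n \<omega>)) / real n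
        = avg_reward idle C X Ch \<omega> n" by simp
    qed
    have "(\<lambda>n. avg_reward idle C X Ch \<omega> n) \<longlonglongrightarrow> mu"
      using Lim_transform_eventually[OF lim ev] by simp
    then show "(\<lambda>n. avg_reward idle C X Ch \<omega> n) \<longlonglongrightarrow>
     (\<Sum>x\<in>UNIV. pst x * (\<Sum>a\<in>UNIV. \<Sum>y\<in>UNIV. q x a * P x y * (C a * of_bool (idle y a))))"
      by (simp add: mu_def h_def f_def)
  qed
qed

end

theorem corollary1:
  fixes M :: "'w measure"
    and P :: "'s::finite \<Rightarrow> 's \<Rightarrow> real"
    and pst :: "'s \<Rightarrow> real"
    and idle :: "'s \<Rightarrow> 'c::finite \<Rightarrow> bool"
    and C :: "'c \<Rightarrow> real"
    and m :: "'s \<Rightarrow> 's"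
    and q :: "'s \<Rightarrow> 'c \<Rightarrow> real"
    and X :: "nat \<Rightarrow> 'w \<Rightarrow> 's"
    and Ch :: "nat \<Rightarrow> 'w \<Rightarrow> 'c"
    and astar :: "'s \<Rightarrow> 'c"
    and c :: real
  assumes "prob_space M"
    and "stochastic_matrix P"
    and "irreducible_chain P"
    and "stationary_dist P pst"
    and m_max: "\<And>s j. P s j \<le> P s (m s)"
    and q_dist: "\<And>s a. 0 \<le> q s a"
    and q_supp: "\<And>s a. \<not> idle (m s) a \<Longrightarrow> q s a = 0"
    and q_sum: "\<And>s. (\<Sum>a\<in>UNIV. q s a) = 1"
    and "access_process M P q X Ch"
  shows
    "(((\<forall>s. idle (m s) (astar s) \<and> (\<forall>a. idle (m s) a \<longrightarrow> C a \<le> C (astar s))) \<and>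
      (\<forall>s a. q s a = of_bool (a = astar s)))
     \<longrightarrow> (AE \<omega> in M. (avg_reward idle C X Ch \<omega>) \<longlonglongrightarrow>
            (\<Sum>s\<in>UNIV. pst s * Max (C ` {a. idle (m s) a}) *
               (P s (m s) + (\<Sum>j\<in>UNIV - {m s}. P s j * of_bool (idle j (astar s)))))))
   \<and>
    (((\<forall>a. C a = c) \<and>
      (\<forall>s a. q s a = of_bool (idle (m s) a) / real (card {a. idle (m s) a})))
     \<longrightarrow> (AE \<omega> in M. (avg_reward idle C X Ch \<omega>) \<longlonglongrightarrow>
            c * (\<Sum>s\<in>UNIV. pst s * (P s (m s) + (\<Sum>j\<in>UNIV - {m s}. P s j *
                   real (card ({a. idle j a} \<inter> {a. idle (m s) a})) / real (card {a. idle (m s) a})))))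
       \<and> c * (\<Sum>s\<in>UNIV. pst s * (P s (m s) + (\<Sum>j\<in>UNIV - {m s}. P s j *
                   real (card ({a. idle j a} \<inter> {a. idle (m s) a})) / real (card {a. idle (m s) a}))))
         = c * (\<Sum>s\<in>UNIV. \<Sum>j\<in>UNIV. pst s * P s j *
                 (\<Sum>a\<in>UNIV. of_bool (idle j a) * of_bool (idle (m s) a))
                 / (\<Sum>a\<in>UNIV. of_bool (idle (m s) a))))"
proof -
  have apI: "ap M P q X Ch" unfolding ap_def ap_axioms_def using assms(1,2,9) q_dist q_sum by auto
  interpret ap M P q X Ch by (rule apI)
  define L where "L = (\<Sum>x\<in>UNIV. pst x * (\<Sum>a\<in>UNIV. \<Sum>y\<in>UNIV. q x a * P x y * (C a * of_bool (idle y a))))"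
  have E: "AE \<omega> in M. (\<lambda>n. avg_reward idle C X Ch \<omega> n) \<longlonglongrightarrow> L"
    unfolding L_def by (rule ergodic[OF assms(3) assms(4)])
  show ?thesis
  proof (rule conjI; intro impI)
    assume H: "(\<forall>s. idle (m s) (astar s) \<and> (\<forall>a. idle (m s) a \<longrightarrow> C a \<le> C (astar s))) \<and>
      (\<forall>s a. q s a = of_bool (a = astar s))"
    have eq1: "L = (\<Sum>s\<in>UNIV. pst s * Max (C ` {a. idle (m s) a}) *
               (P s (m s) + (\<Sum>j\<in>UNIV - {m s}. P s j * of_bool (idle j (astar s)))))"
      unfolding L_def
    proof (rule sum.cong[OF refl])
      fix s
      have idl: "idle (m s) (astar s)" and mx: "\<And>a. idle (m s) a \<Longrightarrow> C a \<le> C (astar s)"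
        and qa: "\<And>a. q s a = of_bool (a = astar s)" using H by auto
      have Mx: "Max (C ` {a. idle (m s) a}) = C (astar s)" by (rule Max_eqI) (use idl mx in auto)
      have sr: "P s (m s) + (\<Sum>j\<in>UNIV - {m s}. P s j * of_bool (idle j (astar s)))
          = (\<Sum>j\<in>UNIV. P s j * of_bool (idle j (astar s)))"
      proof -
        have "(\<Sum>j\<in>UNIV. P s j * of_bool (idle j (astar s))) = P s (m s) * of_bool (idle (m s) (astar s)) + (\<Sum>j\<in>UNIV - {m s}. P s j * of_bool (idle j (astar s)))"
          by (rule sum.remove) auto
        then show ?thesis by (simp only: idl of_bool_eq(2) mult_1_right)
      qed
      have "(\<Sum>a\<in>UNIV. \<Sum>y\<in>UNIV. q s a * P s y * (C a * of_bool (idle y a)))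
          = (\<Sum>a\<in>UNIV. of_bool (a = astar s) * (\<Sum>y\<in>UNIV. P s y * (C a * of_bool (idle y a))))"
        by (simp only: qa sum_distrib_left mult.assoc)
      also have "\<dots> = (\<Sum>a\<in>UNIV. if a = astar s then (\<Sum>y\<in>UNIV. P s y * (C a * of_bool (idle y a))) else 0)"
        by (intro sum.cong refl) simp
      also have "\<dots> = (\<Sum>y\<in>UNIV. P s y * (C (astar s) * of_bool (idle y (astar s))))"
        by (subst sum.delta) auto
      also have "\<dots> = C (astar s) * (\<Sum>j\<in>UNIV. P s j * of_bool (idle j (astar s)))"
        by (simp only: sum_distrib_left mult_ac)
      finally show "pst s * (\<Sum>a\<in>UNIV. \<Sum>y\<in>UNIV. q s a * P s y * (C a * of_bool (idle y a)))
          = pst s * Max (C ` {a. idle (m s) a}) * (P s (m s) + (\<Sum>j\<in>UNIV - {m s}. P s j * of_bool (idle j (astar s))))"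
        using Mx sr by simp
    qed
    show "AE \<omega> in M. (avg_reward idle C X Ch \<omega>) \<longlonglongrightarrow>
            (\<Sum>s\<in>UNIV. pst s * Max (C ` {a. idle (m s) a}) *
               (P s (m s) + (\<Sum>j\<in>UNIV - {m s}. P s j * of_bool (idle j (astar s)))))"
      using E unfolding eq1 .
  next
    assume H2: "(\<forall>a. C a = c) \<and>
      (\<forall>s a. q s a = of_bool (idle (m s) a) / real (card {a. idle (m s) a}))"
    define K where "K s = real (card {a. idle (m s) a})" for s
    have qK: "q s a = of_bool (idle (m s) a) * inverse (K s)" for s a
      using H2 by (simp add: K_def divide_inverse)
    have Cc: "C a = c" for a using H2 by simp
    have Kpos: "K s \<noteq> 0" for s
    proof
      assume K0: "K s = 0"
      have "(\<Sum>a\<in>UNIV. q s a) = 0" by (simp add: qK K0)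
      then show False using q_sum[of s] by simp
    qed
    have cardI: "(\<Sum>a\<in>UNIV. of_bool (idle j a) * of_bool (idle k a) :: real) = real (card ({a. idle j a} \<inter> {a. idle k a}))" for j k
    proof -
      have "(\<Sum>a\<in>UNIV. of_bool (idle j a) * of_bool (idle k a) :: real) = (\<Sum>a\<in>UNIV. of_bool (a \<in> {a. idle j a} \<inter> {a. idle k a}))"
        by (intro sum.cong) auto
      then show ?thesis by simp
    qed
    have card1: "(\<Sum>a\<in>UNIV. of_bool (idle k a) :: real) = real (card {a. idle k a})" for k by simp
    define Gs where "Gs s = (\<Sum>j\<in>UNIV. P s j * real (card ({a. idle j a} \<inter> {a. idle (m s) a})) / K s)" for s
    have inner2: "(\<Sum>a\<in>UNIV. \<Sum>y\<in>UNIV. q s a * P s y * (C a * of_bool (idle y a))) = c * Gs s" for s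
    proof -
      have "(\<Sum>a\<in>UNIV. \<Sum>y\<in>UNIV. q s a * P s y * (C a * of_bool (idle y a)))
          = (\<Sum>y\<in>UNIV. \<Sum>a\<in>UNIV. q s a * P s y * (C a * of_bool (idle y a)))" by (rule sum.swap)
      also have "\<dots> = (\<Sum>y\<in>UNIV. c * (P s y * (\<Sum>a\<in>UNIV. of_bool (idle y a) * of_bool (idle (m s) a)) / K s))"
      proof (rule sum.cong[OF refl])
        fix y
        have "(\<Sum>a\<in>UNIV. q s a * P s y * (C a * of_bool (idle y a)))
            = (\<Sum>a\<in>UNIV. (c * P s y * inverse (K s)) * (of_bool (idle y a) * of_bool (idle (m s) a)))"
          by (intro sum.cong refl) (simp only: qK Cc mult_ac)
        also have "\<dots> = (c * P s y * inverse (K s)) * (\<Sum>a\<in>UNIV. of_bool (idle y a) * of_bool (idle (m s) a))"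
          by (simp only: sum_distrib_left)
        also have "\<dots> = c * (P s y * (\<Sum>a\<in>UNIV. of_bool (idle y a) * of_bool (idle (m s) a)) / K s)"
          by (simp only: divide_inverse mult_ac)
        finally show "(\<Sum>a\<in>UNIV. q s a * P s y * (C a * of_bool (idle y a)))
            = c * (P s y * (\<Sum>a\<in>UNIV. of_bool (idle y a) * of_bool (idle (m s) a)) / K s)" .
      qed
      also have "\<dots> = c * Gs s" by (simp only: Gs_def cardI sum_distrib_left)
      finally show ?thesis .
    qed
    have t1: "P s (m s) + (\<Sum>j\<in>UNIV - {m s}. P s j *
                   real (card ({a. idle j a} \<inter> {a. idle (m s) a})) / real (card {a. idle (m s) a})) = Gs s" for s
    proof -
      have "P s (m s) * real (card ({a. idle (m s) a} \<inter> {a. idle (m s) a})) / K s = P s (m s)"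
        using Kpos[of s] by (simp add: K_def)
      then show ?thesis unfolding Gs_def by (simp add: sum.remove[of UNIV "m s"] K_def)
    qed
    have t2: "(\<Sum>j\<in>UNIV. pst s * P s j *
                 (\<Sum>a\<in>UNIV. of_bool (idle j a) * of_bool (idle (m s) a))
                 / (\<Sum>a\<in>UNIV. of_bool (idle (m s) a))) = pst s * Gs s" for s
    proof -
      have "(\<Sum>j\<in>UNIV. pst s * P s j *
                 (\<Sum>a\<in>UNIV. of_bool (idle j a) * of_bool (idle (m s) a))
                 / (\<Sum>a\<in>UNIV. of_bool (idle (m s) a)))
          = (\<Sum>j\<in>UNIV. pst s * (P s j * real (card ({a. idle j a} \<inter> {a. idle (m s) a})) / K s))"
        by (intro sum.cong refl) (simp only: cardI card1 K_def times_divide_eq_right mult.assoc)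
      also have "\<dots> = pst s * Gs s" by (simp only: Gs_def sum_distrib_left)
      finally show ?thesis .
    qed
    have eqL: "L = c * (\<Sum>s\<in>UNIV. pst s * (P s (m s) + (\<Sum>j\<in>UNIV - {m s}. P s j *
                   real (card ({a. idle j a} \<inter> {a. idle (m s) a})) / real (card {a. idle (m s) a}))))"
      unfolding L_def t1 inner2 by (simp add: sum_distrib_left mult_ac)
    show "(AE \<omega> in M. (avg_reward idle C X Ch \<omega>) \<longlonglongrightarrow>
            c * (\<Sum>s\<in>UNIV. pst s * (P s (m s) + (\<Sum>j\<in>UNIV - {m s}. P s j *
                   real (card ({a. idle j a} \<inter> {a. idle (m s) a})) / real (card {a. idle (m s) a})))))
       \<and> c * (\<Sum>s\<in>UNIV. pst s * (P s (m s) + (\<Sum>j\<in>UNIV - {m s}. P s j *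
                   real (card ({a. idle j a} \<inter> {a. idle (m s) a})) / real (card {a. idle (m s) a}))))
         = c * (\<Sum>s\<in>UNIV. \<Sum>j\<in>UNIV. pst s * P s j *
                 (\<Sum>a\<in>UNIV. of_bool (idle j a) * of_bool (idle (m s) a))
                 / (\<Sum>a\<in>UNIV. of_bool (idle (m s) a)))"
    proof
      show "AE \<omega> in M. (avg_reward idle C X Ch \<omega>) \<longlonglongrightarrow>
            c * (\<Sum>s\<in>UNIV. pst s * (P s (m s) + (\<Sum>j\<in>UNIV - {m s}. P s j *
                   real (card ({a. idle j a} \<inter> {a. idle (m s) a})) / real (card {a. idle (m s) a}))))"
        using E unfolding eqL .
      show "c * (\<Sum>s\<in>UNIV. pst s * (P s (m s) + (\<Sum>j\<in>UNIV - {m s}. P s j *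
                   real (card ({a. idle j a} \<inter> {a. idle (m s) a})) / real (card {a. idle (m s) a}))))
         = c * (\<Sum>s\<in>UNIV. \<Sum>j\<in>UNIV. pst s * P s j *
                 (\<Sum>a\<in>UNIV. of_bool (idle j a) * of_bool (idle (m s) a))
                 / (\<Sum>a\<in>UNIV. of_bool (idle (m s) a)))"
        by (simp only: t1 t2)
    qed
  qed
qed


end
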